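(* Let $B$ be a finite set of Boolean functions. Then there exists a monadic second-order (MSO) formula $\theta_{\mathit{sat}}$ over the vocabulary $\tau_{B,\mathit{prop}}$ such that for every set $\Gamma$ of propositional $B$-formulae it holds that $\Gamma$ is satisfiable if and only if $\mathcal{A}_\Gamma \models \theta_{\mathit{sat}}$.
   Context: For a finite set $B$ of Boolean functions, a $B$-formula is a propositional formula built from propositional variables by applying functions $f\in B$ (0-ary functions of $B$ act as constants). Let $\tau_B$ be the vocabulary consisting of a unary relation symbol $\mathrm{const}_f$ for each $f\in B$ of arity $0$ and a binary relation symbol $\mathrm{conn}_{f,i}$ for each $f\in B$ and each $1\le i\le \mathrm{arity}(f)$. Let $\tau_{B,\mathit{prop}}=\tau_B\cup\{\mathrm{var},\mathrm{repr}\}$ with $\mathrm{var},\mathrm{repr}$ unary. For a set $\Gamma$ of $B$-formulae, $\mathcal{A}_\Gamma$ is the $\tau_{B,\mathit{prop}}$-structure whose universe is the set of subformulae of the formulae in $\Gamma$, where $\mathrm{var}(x)$ holds iff $x$ is a variable, $\mathrm{repr}(x)$ holds iff $x\in\Gamma$, $\mathrm{const}_f(x)$ holds iff $x$ is the constant $f$, and $\mathrm{conn}_{f,i}(x,y)$ holds iff $x$ is the $i$-th argument of the function $f$ at the root of the formula $y$. *)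

theory Defs
  imports Main
begin

text \<open>A Boolean function is given by its arity n together with a map on bool lists;
  only its values on lists of length n are ever used.\<close>
type_synonym bfun = "nat \<times> (bool list \<Rightarrow> bool)"

definition arity :: "bfun \<Rightarrow> nat" where "arity f = fst f"
definition bapply :: "bfun \<Rightarrow> bool list \<Rightarrow> bool" where "bapply f = snd f"

datatype 'v bform = PVar 'v | App bfun "'v bform list"

fun is_Bformula :: "bfun set \<Rightarrow> 'v bform \<Rightarrow> bool" where
  "is_Bformula B (PVar v) = True"
| "is_Bformula B (App f args) =
     (f \<in> B \<and> length args = arity f \<and> (\<forall>a\<in>set args. is_Bformula B a))"

fun eval :: "('v \<Rightarrow> bool) \<Rightarrow> 'v bform \<Rightarrow> bool" where
  "eval \<sigma> (PVar v) = \<sigma> v"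
| "eval \<sigma> (App f args) = bapply f (map (eval \<sigma>) args)"

definition satisfiable :: "'v bform set \<Rightarrow> bool" where
  "satisfiable \<Gamma> \<longleftrightarrow> (\<exists>\<sigma>. \<forall>\<phi>\<in>\<Gamma>. eval \<sigma> \<phi>)"

fun subforms :: "'v bform \<Rightarrow> 'v bform set" where
  "subforms (PVar v) = {PVar v}"
| "subforms (App f args) = insert (App f args) (\<Union>a\<in>set args. subforms a)"

datatype rsym = RVar | RRepr | RConst bfun | RConn bfun nat

fun rarity :: "rsym \<Rightarrow> nat" where
  "rarity RVar = 1"
| "rarity RRepr = 1"
| "rarity (RConst f) = 1"
| "rarity (RConn f i) = 2"

definition tau_B :: "bfun set \<Rightarrow> rsym set" where
  "tau_B B = {RConst f | f. f \<in> B \<and> arity f = 0}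
           \<union> {RConn f i | f i. f \<in> B \<and> 1 \<le> i \<and> i \<le> arity f}"

definition tau_B_prop :: "bfun set \<Rightarrow> rsym set" where
  "tau_B_prop B = tau_B B \<union> {RVar, RRepr}"

text \<open>First-order variables and set (monadic second-order) variables are both
  indexed by naturals, in separate namespaces.\<close>
datatype mso =
    Rel rsym "nat list"
  | Eq nat nat
  | Mem nat nat
  | Neg mso
  | Conj mso mso
  | ExFO nat mso
  | ExSO nat mso

fun fo_free :: "mso \<Rightarrow> nat set" where
  "fo_free (Rel r xs) = set xs"
| "fo_free (Eq x y) = {x, y}"
| "fo_free (Mem x X) = {x}"
| "fo_free (Neg \<phi>) = fo_free \<phi>"
| "fo_free (Conj \<phi> \<psi>) = fo_free \<phi> \<union> fo_free \<psi>"
| "fo_free (ExFO x \<phi>) = fo_free \<phi> - {x}"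
| "fo_free (ExSO X \<phi>) = fo_free \<phi>"

fun so_free :: "mso \<Rightarrow> nat set" where
  "so_free (Rel r xs) = {}"
| "so_free (Eq x y) = {}"
| "so_free (Mem x X) = {X}"
| "so_free (Neg \<phi>) = so_free \<phi>"
| "so_free (Conj \<phi> \<psi>) = so_free \<phi> \<union> so_free \<psi>"
| "so_free (ExFO x \<phi>) = so_free \<phi>"
| "so_free (ExSO X \<phi>) = so_free \<phi> - {X}"

definition mso_sentence :: "mso \<Rightarrow> bool" where
  "mso_sentence \<phi> \<longleftrightarrow> fo_free \<phi> = {} \<and> so_free \<phi> = {}"

fun mso_over :: "rsym set \<Rightarrow> mso \<Rightarrow> bool" where
  "mso_over R (Rel r xs) = (r \<in> R \<and> length xs = rarity r)"
| "mso_over R (Eq x y) = True"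
| "mso_over R (Mem x X) = True"
| "mso_over R (Neg \<phi>) = mso_over R \<phi>"
| "mso_over R (Conj \<phi> \<psi>) = (mso_over R \<phi> \<and> mso_over R \<psi>)"
| "mso_over R (ExFO x \<phi>) = mso_over R \<phi>"
| "mso_over R (ExSO X \<phi>) = mso_over R \<phi>"

fun msat :: "'a set \<Rightarrow> (rsym \<Rightarrow> 'a list \<Rightarrow> bool) \<Rightarrow> (nat \<Rightarrow> 'a) \<Rightarrow> (nat \<Rightarrow> 'a set)
              \<Rightarrow> mso \<Rightarrow> bool" where
  "msat U I fo so (Rel r xs) = I r (map fo xs)"
| "msat U I fo so (Eq x y) = (fo x = fo y)"
| "msat U I fo so (Mem x X) = (fo x \<in> so X)"
| "msat U I fo so (Neg \<phi>) = (\<not> msat U I fo so \<phi>)"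
| "msat U I fo so (Conj \<phi> \<psi>) = (msat U I fo so \<phi> \<and> msat U I fo so \<psi>)"
| "msat U I fo so (ExFO x \<phi>) = (\<exists>a\<in>U. msat U I (fo(x := a)) so \<phi>)"
| "msat U I fo so (ExSO X \<phi>) = (\<exists>A. A \<subseteq> U \<and> msat U I fo (so(X := A)) \<phi>)"

text \<open>Truth of a sentence in a structure (assignments are irrelevant for sentences).\<close>
definition models :: "'a set \<Rightarrow> (rsym \<Rightarrow> 'a list \<Rightarrow> bool) \<Rightarrow> mso \<Rightarrow> bool" where
  "models U I \<phi> \<longleftrightarrow> msat U I (\<lambda>_. undefined) (\<lambda>_. {}) \<phi>"

definition A_univ :: "'v bform set \<Rightarrow> 'v bform set" where
  "A_univ \<Gamma> = (\<Union>\<phi>\<in>\<Gamma>. subforms \<phi>)"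

fun A_rel :: "'v bform set \<Rightarrow> rsym \<Rightarrow> 'v bform list \<Rightarrow> bool" where
  "A_rel \<Gamma> RVar [x] = (\<exists>v. x = PVar v)"
| "A_rel \<Gamma> RRepr [x] = (x \<in> \<Gamma>)"
| "A_rel \<Gamma> (RConst f) [x] = (arity f = 0 \<and> x = App f [])"
| "A_rel \<Gamma> (RConn f i) [x, y] =
     (\<exists>args. y = App f args \<and> 1 \<le> i \<and> i \<le> length args \<and> args ! (i - 1) = x)"
| "A_rel \<Gamma> _ _ = False"

end

theory Submission
  imports Defs
begin

definition TT :: mso where "TT = Neg (ExFO 0 (Neg (Eq 0 0)))"
definition Imp :: "mso \<Rightarrow> mso \<Rightarrow> mso" where "Imp a b = Neg (Conj a (Neg b))"
definition All :: "nat \<Rightarrow> mso \<Rightarrow> mso" where "All x a = Neg (ExFO x (Neg a))"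
fun BigAnd :: "mso list \<Rightarrow> mso" where
  "BigAnd [] = TT" | "BigAnd (a # l) = Conj a (BigAnd l)"
definition lit :: "nat \<Rightarrow> bool \<Rightarrow> mso" where
  "lit j b = (if b then Mem j 0 else Neg (Mem j 0))"
fun boollists :: "nat \<Rightarrow> bool list list" where
  "boollists 0 = [[]]"
| "boollists (Suc n) = concat (map (\<lambda>bs. [True # bs, False # bs]) (boollists n))"

lemma boollists_set: "set (boollists n) = {bs. length bs = n}"
proof (induction n)
  case 0 then show ?case by auto
next
  case (Suc n)
  show ?case
  proof (rule set_eqI, rule iffI)
    fix bs :: "bool list" assume "bs \<in> set (boollists (Suc n))" then show "bs \<in> {bs. length bs = Suc n}"
      using Suc by auto
  next
    fix bs :: "bool list" assume "bs \<in> {bs. length bs = Suc n}"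
    then obtain b cs where "bs = b # cs" "length cs = n" by (cases bs) auto
    then show "bs \<in> set (boollists (Suc n))" using Suc by (cases b) auto
  qed
qed

definition guard :: "bfun \<Rightarrow> mso" where
  "guard f = (if arity f = 0 then Rel (RConst f) [0] else ExFO 1 (Rel (RConn f 1) [1,0]))"

definition local :: "bfun \<Rightarrow> mso" where
  "local f = Imp (guard f) (BigAnd (map (\<lambda>bs. Imp (BigAnd (map (\<lambda>i. ExFO 1
      (Conj (Rel (RConn f (Suc i)) [1,0]) (lit 1 (bs!i)))) [0..<arity f])) (lit 0 (bapply f bs)))
      (boollists (arity f))))"

definition theta :: "bfun list \<Rightarrow> mso" where
  "theta bl = ExSO 0 (Conj (All 0 (BigAnd (map local bl))) (All 0 (Imp (Rel RRepr [0]) (Mem 0 0))))"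

lemma msat_Imp: "msat U I fo so (Imp a b) \<longleftrightarrow> (msat U I fo so a \<longrightarrow> msat U I fo so b)"
  by (simp add: Imp_def)

lemma msat_BigAnd: "msat U I fo so (BigAnd l) \<longleftrightarrow> (\<forall>a\<in>set l. msat U I fo so a)"
  by (induction l) (auto simp: TT_def)

lemma fo_free_BigAnd: "fo_free (BigAnd l) = (\<Union>a\<in>set l. fo_free a)"
  by (induction l) (auto simp: TT_def)
lemma so_free_BigAnd: "so_free (BigAnd l) = (\<Union>a\<in>set l. so_free a)"
  by (induction l) (auto simp: TT_def)
lemma over_BigAnd: "mso_over R (BigAnd l) = (\<forall>a\<in>set l. mso_over R a)"
  by (induction l) (auto simp: TT_def)

lemma sub_refl: "\<phi> \<in> subforms \<phi>"
  by (cases \<phi>) auto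

lemma sub_trans: "\<psi> \<in> subforms \<phi> \<Longrightarrow> subforms \<psi> \<subseteq> subforms \<phi>"
  by (induction \<phi>) auto

lemma sub_B: "is_Bformula B \<phi> \<Longrightarrow> \<psi> \<in> subforms \<phi> \<Longrightarrow> is_Bformula B \<psi>"
  by (induction \<phi>) auto

lemma univ_B: "\<forall>\<phi>\<in>\<Gamma>. is_Bformula B \<phi> \<Longrightarrow> x \<in> A_univ \<Gamma> \<Longrightarrow> is_Bformula B x"
  unfolding A_univ_def using sub_B by blast

lemma univ_args: "App g args \<in> A_univ \<Gamma> \<Longrightarrow> a \<in> set args \<Longrightarrow> a \<in> A_univ \<Gamma>"
  unfolding A_univ_def using sub_trans sub_refl
  by (smt (verit, del_insts) UN_iff insert_subset subforms.simps(2) subset_eq)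

lemma guard_sem:
  assumes "\<forall>\<phi>\<in>\<Gamma>. is_Bformula B \<phi>" "fo 0 \<in> A_univ \<Gamma>"
  shows "msat (A_univ \<Gamma>) (A_rel \<Gamma>) fo so (guard f) \<longleftrightarrow> (\<exists>args. fo 0 = App f args)"
proof -
  have Bx: "is_Bformula B (fo 0)" using univ_B assms by blast
  show ?thesis
  proof (cases "arity f = 0")
    case True
    then show ?thesis using Bx by (auto simp: guard_def)
  next
    case False
    show ?thesis
    proof
      assume "msat (A_univ \<Gamma>) (A_rel \<Gamma>) fo so (guard f)"
      then show "\<exists>args. fo 0 = App f args" using False by (auto simp: guard_def)
    next
      assume "\<exists>args. fo 0 = App f args"
      then obtain args where a: "fo 0 = App f args" by blast
      then have "length args = arity f" using Bx by auto
      then have "args ! 0 \<in> set args" using False by auto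
      then have "args ! 0 \<in> A_univ \<Gamma>" using univ_args assms(2) a by metis
      then show "msat (A_univ \<Gamma>) (A_rel \<Gamma>) fo so (guard f)"
        using False a \<open>length args = arity f\<close> unfolding guard_def
        by (auto intro!: bexI[of _ "args ! 0"])
    qed
  qed
qed

lemma local_sem:
  assumes "\<forall>\<phi>\<in>\<Gamma>. is_Bformula B \<phi>" "fo 0 \<in> A_univ \<Gamma>"
  shows "msat (A_univ \<Gamma>) (A_rel \<Gamma>) fo so (local f) \<longleftrightarrow>
    (\<forall>args. fo 0 = App f args \<longrightarrow> (fo 0 \<in> so 0 \<longleftrightarrow> bapply f (map (\<lambda>a. a \<in> so 0) args)))"
proof -
  let ?U = "A_univ \<Gamma>" and ?I = "A_rel \<Gamma>"
  have Bx: "is_Bformula B (fo 0)" using univ_B assms by blast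
  have inner: "msat ?U ?I fo so (BigAnd (map (\<lambda>bs. Imp (BigAnd (map (\<lambda>i. ExFO 1
      (Conj (Rel (RConn f (Suc i)) [1,0]) (lit 1 (bs!i)))) [0..<arity f])) (lit 0 (bapply f bs)))
      (boollists (arity f))))
    \<longleftrightarrow> (fo 0 \<in> so 0 \<longleftrightarrow> bapply f (map (\<lambda>a. a \<in> so 0) args))"
    if a: "fo 0 = App f args" for args
  proof -
    have len: "length args = arity f" using Bx a by auto
    have ex: "msat ?U ?I fo so (ExFO 1 (Conj (Rel (RConn f (Suc i)) [1,0]) (lit 1 b)))
        \<longleftrightarrow> (args ! i \<in> so 0 \<longleftrightarrow> b)" if "i < arity f" for i b
    proof -
      have "args ! i \<in> set args" using that len by auto
      then have "args ! i \<in> ?U" using univ_args assms(2) a by metis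
      then show ?thesis using a that len by (auto simp: lit_def)
    qed
    have eqv: "(\<forall>i\<in>set [0..<arity f]. (args ! i \<in> so 0 \<longleftrightarrow> bs ! i))
        \<longleftrightarrow> bs = map (\<lambda>a. a \<in> so 0) args" if "length bs = arity f" for bs
      using that len by (auto simp: list_eq_iff_nth_eq)
    have "msat ?U ?I fo so (BigAnd (map (\<lambda>bs. Imp (BigAnd (map (\<lambda>i. ExFO 1
      (Conj (Rel (RConn f (Suc i)) [1,0]) (lit 1 (bs!i)))) [0..<arity f])) (lit 0 (bapply f bs)))
      (boollists (arity f)))) \<longleftrightarrow>
      (\<forall>bs. length bs = arity f \<longrightarrow> bs = map (\<lambda>a. a \<in> so 0) args \<longrightarrow>
          (fo 0 \<in> so 0 \<longleftrightarrow> bapply f bs))"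
      using ex eqv by (simp add: msat_BigAnd boollists_set Imp_def lit_def)
    also have "\<dots> \<longleftrightarrow> (fo 0 \<in> so 0 \<longleftrightarrow> bapply f (map (\<lambda>a. a \<in> so 0) args))"
      using len by auto
    finally show ?thesis .
  qed
  show ?thesis
    unfolding local_def msat_Imp guard_sem[where \<Gamma>=\<Gamma> and B=B and so=so and f=f and fo=fo, OF assms] using inner by blast
qed

theorem lemma1:
  fixes B :: "bfun set"
  assumes "finite B"
  shows "\<exists>\<theta>. mso_sentence \<theta> \<and> mso_over (tau_B_prop B) \<theta> \<and>
           (\<forall>\<Gamma> :: 'v bform set. (\<forall>\<phi>\<in>\<Gamma>. is_Bformula B \<phi>) \<longrightarrow>
              (satisfiable \<Gamma> \<longleftrightarrow> models (A_univ \<Gamma>) (A_rel \<Gamma>) \<theta>))"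
proof -
  obtain bl where bl: "set bl = B" using finite_list[OF assms] by blast
  have sent: "mso_sentence (theta bl)"
  proof -
    have "fo_free (local f) \<subseteq> {0}" for f
      by (auto simp: local_def Imp_def guard_def fo_free_BigAnd lit_def TT_def split: if_splits)
    moreover have "so_free (local f) \<subseteq> {0}" for f
      by (auto simp: local_def Imp_def guard_def so_free_BigAnd lit_def TT_def split: if_splits)
    ultimately show ?thesis
      by (fastforce simp: mso_sentence_def theta_def All_def Imp_def fo_free_BigAnd so_free_BigAnd)
  qed
  have over: "mso_over (tau_B_prop B) (theta bl)"
  proof -
    have "mso_over (tau_B_prop B) (local f)" if "f \<in> B" for f
    proof -
      have c: "arity f = 0 \<Longrightarrow> RConst f \<in> tau_B_prop B"
        using that unfolding tau_B_prop_def tau_B_def by blast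
      have d: "i < arity f \<Longrightarrow> RConn f (Suc i) \<in> tau_B_prop B" for i
        using that unfolding tau_B_prop_def tau_B_def by (auto simp: Suc_le_eq) (metis prod.collapse)
      show ?thesis using c d[of 0] d
        by (auto simp: local_def Imp_def guard_def over_BigAnd lit_def TT_def
          split: if_splits)
    qed
    then show ?thesis using bl
      by (auto simp: theta_def All_def Imp_def over_BigAnd tau_B_prop_def)
  qed
  have sem: "satisfiable \<Gamma> \<longleftrightarrow> models (A_univ \<Gamma>) (A_rel \<Gamma>) (theta bl)"
    if G: "\<forall>\<phi>\<in>\<Gamma>. is_Bformula B \<phi>" for \<Gamma> :: "'v bform set"
  proof -
    let ?U = "A_univ \<Gamma>"
    have GU: "\<Gamma> \<subseteq> ?U" unfolding A_univ_def using sub_refl by blast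
    have m: "models ?U (A_rel \<Gamma>) (theta bl) \<longleftrightarrow>
      (\<exists>T. T \<subseteq> ?U \<and> (\<forall>x\<in>?U. \<forall>f\<in>B. \<forall>args. x = App f args \<longrightarrow>
           (x \<in> T \<longleftrightarrow> bapply f (map (\<lambda>a. a \<in> T) args))) \<and> (\<forall>x\<in>?U. x \<in> \<Gamma> \<longrightarrow> x \<in> T))"
    proof -
      have l: "msat ?U (A_rel \<Gamma>) (fo(0 := x)) (so(0 := T)) (local f) \<longleftrightarrow>
        (\<forall>args. x = App f args \<longrightarrow> (x \<in> T \<longleftrightarrow> bapply f (map (\<lambda>a. a \<in> T) args)))"
        if "x \<in> ?U" for fo so x T f
        using local_sem[where \<Gamma>=\<Gamma> and B=B and fo="fo(0:=x)" and so="so(0:=T)" and f=f] G that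
        by simp
      show ?thesis unfolding models_def theta_def All_def Imp_def
        by (simp add: msat_BigAnd l bl)
    qed
    show ?thesis
    proof
      assume "satisfiable \<Gamma>"
      then obtain \<sigma> where s: "\<forall>\<phi>\<in>\<Gamma>. eval \<sigma> \<phi>" unfolding satisfiable_def by blast
      define T where "T = {\<phi>\<in>?U. eval \<sigma> \<phi>}"
      have "\<forall>x\<in>?U. \<forall>f\<in>B. \<forall>args. x = App f args \<longrightarrow>
           (x \<in> T \<longleftrightarrow> bapply f (map (\<lambda>a. a \<in> T) args))"
      proof (intro ballI allI impI)
        fix x f args assume x: "x \<in> ?U" and a: "x = App f args"
        have e: "map (\<lambda>a. a \<in> T) args = map (eval \<sigma>) args"
          using univ_args[of f args \<Gamma>] x a unfolding T_def by (auto intro!: map_cong)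
        have "x \<in> T \<longleftrightarrow> eval \<sigma> x" using x unfolding T_def by simp
        then show "x \<in> T \<longleftrightarrow> bapply f (map (\<lambda>a. a \<in> T) args)"
          using a e by (simp only: eval.simps(2))
      qed
      moreover have "\<forall>x\<in>?U. x \<in> \<Gamma> \<longrightarrow> x \<in> T" using s unfolding T_def by auto
      moreover have "T \<subseteq> ?U" unfolding T_def by blast
      ultimately show "models ?U (A_rel \<Gamma>) (theta bl)" unfolding m by blast
    next
      assume "models ?U (A_rel \<Gamma>) (theta bl)"
      then obtain T where T: "T \<subseteq> ?U" and loc: "\<forall>x\<in>?U. \<forall>f\<in>B. \<forall>args. x = App f args \<longrightarrow>
           (x \<in> T \<longleftrightarrow> bapply f (map (\<lambda>a. a \<in> T) args))" and rep: "\<forall>x\<in>?U. x \<in> \<Gamma> \<longrightarrow> x \<in> T"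
        unfolding m by blast
      define \<sigma> where "\<sigma> v = (PVar v \<in> T)" for v
      have key: "\<phi> \<in> ?U \<Longrightarrow> (\<phi> \<in> T \<longleftrightarrow> eval \<sigma> \<phi>)" for \<phi>
      proof (induction \<phi>)
        case (PVar v) then show ?case by (simp add: \<sigma>_def)
      next
        case (App g args)
        have "g \<in> B" using univ_B[OF G App.prems] by simp
        have e: "map (\<lambda>a. a \<in> T) args = map (eval \<sigma>) args"
          using App univ_args[of g args \<Gamma>] by (auto intro!: map_cong)
        have "App g args \<in> T \<longleftrightarrow> bapply g (map (\<lambda>a. a \<in> T) args)"
          using loc App.prems \<open>g \<in> B\<close> by blast
        then show ?case using e by (simp only: eval.simps(2))
      qed
      show "satisfiable \<Gamma>" unfolding satisfiable_def using key rep GU by blast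
    qed
  qed
  show ?thesis using sent over sem by blast
qed

end
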